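(* Let $a_1<a_2$ and $b_1<b_2$ be real numbers, and for $i=1,2$ let $R_i$ be the open line segment from $(-1,2a_i,a_i)$ to $(1,-2b_i,b_i)$ in $\mathbb{H}$. Then there is no horizontal line that contains both a point of $R_1$ and a point of $R_2$.
   Context: $\mathbb{H}$ is $\mathbb{R}^3$ with product $(x,y,z)\cdot(x',y',z')=(x+x',y+y',z+z'+\frac{xy'-yx'}{2})$. A horizontal line is a set $\{p\cdot tv:t\in\mathbb{R}\}$ with $p\in\mathbb{H}$ and $v=(a,b,0)\neq0$. *)

theory Defs
  imports Complex_Main
begin

type_synonym heis = "real \<times> real \<times> real"

definition hmult :: "heis \<Rightarrow> heis \<Rightarrow> heis" where
  "hmult p q = (case p of (x, y, z) \<Rightarrow> case q of (x', y', z') \<Rightarrow>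
     (x + x', y + y', z + z' + (x * y' - y * x') / 2))"

definition horizontal_line :: "heis set \<Rightarrow> bool" where
  "horizontal_line L \<longleftrightarrow> (\<exists>p a b. (a, b) \<noteq> (0, 0) \<and>
      L = {hmult p (t * a, t * b, 0) | t. True})"

definition open_seg :: "heis \<Rightarrow> heis \<Rightarrow> heis set" where
  "open_seg P Q = {(case P of (x, y, z) \<Rightarrow> case Q of (x', y', z') \<Rightarrow>
      ((1 - s) * x + s * x', (1 - s) * y + s * y', (1 - s) * z + s * z')) | s. 0 < s \<and> s < 1}"

end

theory Submission
  imports Defs
begin

lemma key:
  fixes a1 a2 b1 b2 s r :: real
  assumes "a1 < a2" "b1 < b2" "0 < s" "s < 1" "0 < r" "r < 1"
  shows "2*(1-r)*(1-s)*(a2-a1) + 2*r*s*(b2-b1) > 0"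
proof -
  have "(1-r)*(1-s)*(a2-a1) > 0" using assms by simp
  moreover have "r*s*(b2-b1) > 0" using assms by simp
  ultimately show ?thesis by linarith
qed

theorem lemma6p1:
  fixes a1 a2 b1 b2 :: real
  assumes "a1 < a2" and "b1 < b2"
  shows "\<not> (\<exists>L. horizontal_line L
              \<and> L \<inter> open_seg (-1, 2 * a1, a1) (1, -2 * b1, b1) \<noteq> {}
              \<and> L \<inter> open_seg (-1, 2 * a2, a2) (1, -2 * b2, b2) \<noteq> {})"
proof
  assume "\<exists>L. horizontal_line L
              \<and> L \<inter> open_seg (-1, 2 * a1, a1) (1, -2 * b1, b1) \<noteq> {}
              \<and> L \<inter> open_seg (-1, 2 * a2, a2) (1, -2 * b2, b2) \<noteq> {}"
  then obtain L where hl: "horizontal_line L"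
    and n1: "L \<inter> open_seg (-1, 2 * a1, a1) (1, -2 * b1, b1) \<noteq> {}"
    and n2: "L \<inter> open_seg (-1, 2 * a2, a2) (1, -2 * b2, b2) \<noteq> {}" by blast
  from hl obtain p a b where L: "L = {hmult p (t * a, t * b, 0) | t. True}"
    unfolding horizontal_line_def by blast
  from n1 obtain t1 s where
    P: "hmult p (t1 * a, t1 * b, 0) = ((1 - s) * -1 + s * 1, (1 - s) * (2*a1) + s * (-2*b1), (1 - s) * a1 + s * b1)"
    and s: "0 < s" "s < 1"
    unfolding L open_seg_def by (auto simp del: prod.inject) (metis (no_types, lifting))
  from n2 obtain t2 r where
    Q: "hmult p (t2 * a, t2 * b, 0) = ((1 - r) * -1 + r * 1, (1 - r) * (2*a2) + r * (-2*b2), (1 - r) * a2 + r * b2)"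
    and r: "0 < r" "r < 1"
    unfolding L open_seg_def by (auto simp del: prod.inject) (metis (no_types, lifting))
  obtain p1 p2 p3 where p: "p = (p1, p2, p3)" by (cases p) auto
  from P have P1: "p1 + t1*a = 2*s - 1" and P2: "p2 + t1*b = (1 - s) * (2*a1) + s * (-2*b1)"
    and P3: "p3 + (p1 * (t1*b) - p2 * (t1*a))/2 = (1 - s) * a1 + s * b1"
    by (auto simp: hmult_def p algebra_simps)
  from Q have Q1: "p1 + t2*a = 2*r - 1" and Q2: "p2 + t2*b = (1 - r) * (2*a2) + r * (-2*b2)"
    and Q3: "p3 + (p1 * (t2*b) - p2 * (t2*a))/2 = (1 - r) * a2 + r * b2"
    by (auto simp: hmult_def p algebra_simps)
  have id: "(p3 + (p1 * (t2*b) - p2 * (t2*a))/2) - (p3 + (p1 * (t1*b) - p2 * (t1*a))/2)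
     = ((p1 + t1*a) * (p2 + t2*b) - (p2 + t1*b) * (p1 + t2*a)) / 2"
    by (simp add: field_simps)
  have "(1 - r) * a2 + r * b2 - ((1 - s) * a1 + s * b1)
     = ((2*s - 1) * ((1 - r) * (2*a2) + r * (-2*b2)) - ((1 - s) * (2*a1) + s * (-2*b1)) * (2*r - 1)) / 2"
    using id by (simp only: P1 P2 P3 Q1 Q2 Q3)
  hence "2*(1-r)*(1-s)*(a2-a1) + 2*r*s*(b2-b1) = 0"
    by (simp add: algebra_simps)
  with key[OF assms s r] show False by simp
qed

end
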